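(* Let $G$ be an $r$-regular graph on $m$ vertices with $r\ge 1$ (i.e. $G$ has at least one edge). (a) If $n\ge 2$ is even, then $K_n\boxtimes G$ is $\mathbb{Z}_{nm}$-distance antimagic. (b) If $n\ge 3$ and $m$ are both odd, then $K_n\boxtimes G$ is $\mathbb{Z}_{nm}$-distance antimagic.
   Context: $K_n$ is the complete graph on $n$ vertices. The strong product $G_1\boxtimes G_2$ has vertex set $V(G_1)\times V(G_2)$, with distinct $(x_1,x_2),(y_1,y_2)$ adjacent iff for each $i$ either $x_i=y_i$ or $x_iy_i\in E(G_i)$. For a graph $H$ with $N$ vertices, a $\mathbb{Z}_N$-distance antimagic labelling is a bijection $f:V(H)\to\mathbb{Z}_N$ such that the weights $w_f(x)=\sum_{y\in N(x)} f(y)$ (mod $N$, $N(x)$ the open neighbourhood) are pairwise distinct; $H$ is $\mathbb{Z}_N$-distance antimagic if such a labelling exists. *)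

theory Defs
  imports Main
begin

definition simple_graph :: "'a set \<Rightarrow> ('a \<Rightarrow> 'a \<Rightarrow> bool) \<Rightarrow> bool" where
  "simple_graph V E \<longleftrightarrow> finite V \<and>
     (\<forall>x y. E x y \<longrightarrow> x \<in> V \<and> y \<in> V) \<and>
     (\<forall>x y. E x y \<longrightarrow> E y x) \<and> (\<forall>x. \<not> E x x)"

definition nbhd :: "'a set \<Rightarrow> ('a \<Rightarrow> 'a \<Rightarrow> bool) \<Rightarrow> 'a \<Rightarrow> 'a set" where
  "nbhd V E x = {y \<in> V. E x y}"

definition regular :: "'a set \<Rightarrow> ('a \<Rightarrow> 'a \<Rightarrow> bool) \<Rightarrow> nat \<Rightarrow> bool" where
  "regular V E r \<longleftrightarrow> (\<forall>x\<in>V. card (nbhd V E x) = r)"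

definition K_verts :: "nat \<Rightarrow> nat set" where "K_verts n = {0..<n}"
definition K_adj :: "nat \<Rightarrow> nat \<Rightarrow> bool" where "K_adj x y \<longleftrightarrow> x \<noteq> y"

definition strong_verts :: "'a set \<Rightarrow> 'b set \<Rightarrow> ('a \<times> 'b) set" where
  "strong_verts V1 V2 = V1 \<times> V2"
definition strong_adj :: "('a \<Rightarrow> 'a \<Rightarrow> bool) \<Rightarrow> ('b \<Rightarrow> 'b \<Rightarrow> bool) \<Rightarrow> 'a \<times> 'b \<Rightarrow> 'a \<times> 'b \<Rightarrow> bool" where
  "strong_adj E1 E2 x y \<longleftrightarrow> x \<noteq> y \<and>
     (fst x = fst y \<or> E1 (fst x) (fst y)) \<and> (snd x = snd y \<or> E2 (snd x) (snd y))"

(* Z_N-distance antimagic labelling, N = |V|; Z_N represented by {0..<N} with arithmetic mod N *)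
definition ZN_dist_antimagic_labelling :: "'a set \<Rightarrow> ('a \<Rightarrow> 'a \<Rightarrow> bool) \<Rightarrow> ('a \<Rightarrow> nat) \<Rightarrow> bool" where
  "ZN_dist_antimagic_labelling V E f \<longleftrightarrow> bij_betw f V {0..<card V} \<and>
     inj_on (\<lambda>x. (\<Sum>y\<in>nbhd V E x. f y) mod card V) V"

definition ZN_dist_antimagic :: "'a set \<Rightarrow> ('a \<Rightarrow> 'a \<Rightarrow> bool) \<Rightarrow> bool" where
  "ZN_dist_antimagic V E \<longleftrightarrow> (\<exists>f. ZN_dist_antimagic_labelling V E f)"

end

theory Submission imports Defs begin

lemma modsub_inj:
  fixes K a b N :: nat
  assumes "a < N" "b < N" "a \<le> K" "b \<le> K" "(K - a) mod N = (K - b) mod N"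
  shows "a = b"
proof -
  have "int (K - a) mod int N = int (K - b) mod int N" using assms(5)
    by (simp flip: of_nat_mod)
  hence h: "(int K - int a) mod int N = (int K - int b) mod int N" using assms(3,4) by (simp add: of_nat_diff)
  have "(int K - (int K - int a)) mod int N = (int K - (int K - int b)) mod int N"
    by (rule mod_diff_cong[OF refl h])
  hence "int a mod int N = int b mod int N" by simp
  hence "int a = int b" using assms(1,2) by simp
  thus ?thesis by simp
qed


lemma general:
  fixes V :: "'a set" and E :: "'a \<Rightarrow> 'a \<Rightarrow> bool" and r m n c :: nat
  and \<pi> :: "nat \<Rightarrow> nat \<Rightarrow> nat"
  assumes sg: "simple_graph V E" and cV: "card V = m" and reg: "regular V E r"
    and pinj: "\<And>j. j < n \<Longrightarrow> inj_on (\<pi> j) {0..<m}"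
    and prng: "\<And>j k. j < n \<Longrightarrow> k < m \<Longrightarrow> \<pi> j k < m"
    and psum: "\<And>k. k < m \<Longrightarrow> (\<Sum>j<n. \<pi> j k) = c"
  shows "ZN_dist_antimagic (strong_verts (K_verts n) V) (strong_adj K_adj E)"
proof -
  have finV: "finite V" using sg by (simp add: simple_graph_def)
  obtain e where e: "bij_betw e V {0..<m}"
    using finV cV by (metis ex_bij_betw_finite_nat)
  define W where "W = strong_verts (K_verts n) V"
  have W: "W = {0..<n} \<times> V" by (simp add: W_def strong_verts_def K_verts_def)
  have cW: "card W = n * m" using W cV by (simp add: card_cartesian_product)
  have finW: "finite W" using W finV by simp
  define f where "f = (\<lambda>(j::nat, v). j * m + \<pi> j (e v))"
  have ev: "v \<in> V \<Longrightarrow> e v < m" for v using e by (auto simp: bij_betw_def)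
  have fl: "f (j, v) < n * m" if "j < n" "v \<in> V" for j v
  proof -
    have "\<pi> j (e v) < m" using prng that ev by blast
    hence "f (j,v) < j*m + m" by (simp add: f_def)
    also have "\<dots> \<le> n * m" using that(1)
      by (metis Suc_leI mult_Suc mult_le_mono1 add.commute)
    finally show ?thesis .
  qed
  have finj: "inj_on f W"
  proof (rule inj_onI)
    fix x y assume x: "x \<in> W" and y: "y \<in> W" and fxy: "f x = f y"
    obtain j v where xj: "x = (j, v)" "j < n" "v \<in> V" using x W by auto
    obtain j' v' where yj: "y = (j', v')" "j' < n" "v' \<in> V" using y W by auto
    have a: "\<pi> j (e v) < m" using prng xj ev by blast
    have b: "\<pi> j' (e v') < m" using prng yj ev by blast
    have eq: "j * m + \<pi> j (e v) = j' * m + \<pi> j' (e v')" using fxy xj yj by (simp add: f_def)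
    have "(j * m + \<pi> j (e v)) div m = j" using a by simp
    moreover have "(j' * m + \<pi> j' (e v')) div m = j'" using b by simp
    ultimately have jj: "j = j'" using eq by simp
    hence "\<pi> j (e v) = \<pi> j (e v')" using eq by simp
    hence "e v = e v'" using pinj[OF xj(2)] ev xj yj by (auto simp: inj_on_def)
    hence "v = v'" using e xj yj by (auto simp: bij_betw_def inj_on_def)
    thus "x = y" using jj xj yj by simp
  qed
  have fimg: "f ` W = {0..<n*m}"
  proof (rule card_subset_eq)
    show "finite {0..<n*m}" by simp
    show "f ` W \<subseteq> {0..<n*m}" using fl W by auto
    show "card (f ` W) = card {0..<n*m}" using card_image[OF finj] cW by simp
  qed
  have fbij: "bij_betw f W {0..<card W}" using finj fimg cW by (simp add: bij_betw_def)
  define D where "D = (\<Sum>j<n. j * m)"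
  define K where "K = (r + 1) * (D + c)"
  have colsum: "(\<Sum>j<n. f (j, w)) = D + c" if "w \<in> V" for w
    using psum[OF ev[OF that]] by (simp add: f_def D_def sum.distrib)
  have wt: "(\<Sum>y\<in>nbhd W (strong_adj K_adj E) (i, v). f y) = K - f (i, v)
        \<and> f (i,v) \<le> K" if "i < n" "v \<in> V" for i v
  proof -
    define Nv where "Nv = insert v (nbhd V E v)"
    have nb: "nbhd W (strong_adj K_adj E) (i, v) = ({0..<n} \<times> Nv) - {(i,v)}"
    proof (rule set_eqI)
      fix y :: "nat \<times> 'a"
      obtain j w where y: "y = (j, w)" by (cases y)
      have "E v w \<Longrightarrow> w \<in> V" using sg by (simp add: simple_graph_def)
      thus "y \<in> nbhd W (strong_adj K_adj E) (i, v) \<longleftrightarrow> y \<in> ({0..<n} \<times> Nv) - {(i,v)}"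
        using that unfolding y Nv_def nbhd_def W strong_adj_def K_adj_def by auto
    qed
    have finNv: "finite Nv" using finV by (simp add: Nv_def nbhd_def)
    have vnot: "v \<notin> nbhd V E v" using sg by (simp add: nbhd_def simple_graph_def)
    have cNv: "card Nv = r + 1" using reg that vnot finV
      by (simp add: Nv_def regular_def nbhd_def)
    have NvV: "Nv \<subseteq> V" using that by (auto simp: Nv_def nbhd_def)
    have iv: "(i,v) \<in> {0..<n} \<times> Nv" using that by (simp add: Nv_def)
    have fin2: "finite ({0..<n} \<times> Nv)" using finNv by simp
    have "(\<Sum>y\<in>{0..<n} \<times> Nv. f y) = (\<Sum>j\<in>{0..<n}. \<Sum>w\<in>Nv. f (j, w))"
      using sum.cartesian_product[of "\<lambda>j w. f (j, w)" Nv "{0..<n}"] by simp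
    also have "\<dots> = (\<Sum>w\<in>Nv. \<Sum>j\<in>{0..<n}. f (j, w))" by (rule sum.swap)
    also have "\<dots> = (\<Sum>w\<in>Nv. \<Sum>j<n. f (j, w))" by (simp add: lessThan_atLeast0)
    also have "\<dots> = (\<Sum>w\<in>Nv. D + c)" using colsum NvV by (intro sum.cong) auto
    also have "\<dots> = K" using cNv by (simp add: K_def)
    finally have S: "(\<Sum>y\<in>{0..<n} \<times> Nv. f y) = K" .
    have "(\<Sum>y\<in>({0..<n} \<times> Nv) - {(i,v)}. f y) = (\<Sum>y\<in>{0..<n} \<times> Nv. f y) - f (i,v)"
      using sum_diff1_nat[of f "{0..<n} \<times> Nv" "(i,v)"] iv by simp
    moreover have "f (i,v) \<le> (\<Sum>y\<in>{0..<n} \<times> Nv. f y)"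
      by (rule member_le_sum[OF iv]) (auto simp: fin2)
    ultimately show ?thesis using nb S by simp
  qed
  have winj: "inj_on (\<lambda>x. (\<Sum>y\<in>nbhd W (strong_adj K_adj E) x. f y) mod card W) W"
  proof (rule inj_onI)
    fix x y assume x: "x \<in> W" and y: "y \<in> W" and h: "(\<Sum>y\<in>nbhd W (strong_adj K_adj E) x. f y) mod card W
       = (\<Sum>z\<in>nbhd W (strong_adj K_adj E) y. f z) mod card W"
    obtain i v where xi: "x = (i, v)" "i < n" "v \<in> V" using x W by auto
    obtain i' v' where yi: "y = (i', v')" "i' < n" "v' \<in> V" using y W by auto
    have "f x = f y"
    proof (rule modsub_inj[of _ "card W" _ K])
      show "f x < card W" "f y < card W" using fl xi yi cW by auto
      show "f x \<le> K" "f y \<le> K" using wt xi yi by auto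
      show "(K - f x) mod card W = (K - f y) mod card W" using h wt xi yi by simp
    qed
    thus "x = y" using finj x y by (auto simp: inj_on_def)
  qed
  show ?thesis unfolding ZN_dist_antimagic_def ZN_dist_antimagic_labelling_def
    using fbij winj W_def by blast
qed

definition pa :: "nat \<Rightarrow> nat \<Rightarrow> nat \<Rightarrow> nat" where
  "pa m j k = (if even j then k else m - 1 - k)"

lemma pa_sum: "k < m \<Longrightarrow> (\<Sum>j<2*t. pa m j k) = t * (m - 1)"
  by (induction t) (auto simp: pa_def)

definition pb :: "nat \<Rightarrow> nat \<Rightarrow> nat \<Rightarrow> nat" where
  "pb h j k = (if j = 0 then k else if j = 1 then (if k \<le> h then k + h else k - h - 1)
     else if j = 2 then (if k \<le> h then 2*(h-k) else 4*h+1-2*k)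
     else if odd j then k else 2*h - k)"

lemma pb_sum: "k < 2*h+1 \<Longrightarrow> (\<Sum>j<2*t+3. pb h j k) = 3*h + t * (2*h)"
proof (induction t)
  case 0
  have "(\<Sum>j<3. pb h j k) = pb h 0 k + pb h 1 k + pb h 2 k"
    by (simp add: numeral_3_eq_3 numeral_2_eq_2)
  also have "\<dots> = 3*h" using 0 unfolding pb_def by simp arith
  finally show ?case by simp
next
  case (Suc t)
  have e: "2 * Suc t + 3 = Suc (Suc (2*t+3))" by simp
  have o: "odd (2*t+3)" by simp
  have a: "pb h (2*t+3) k = k" using o by (simp add: pb_def)
  have b: "pb h (Suc (2*t+3)) k = 2*h - k" by (simp add: pb_def)
  have "(\<Sum>j<Suc (Suc (2*t+3)). pb h j k) = (\<Sum>j<2*t+3. pb h j k) + pb h (2*t+3) k + pb h (Suc (2*t+3)) k"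
    by (simp only: sum.lessThan_Suc)
  also have "\<dots> = 3*h + t * (2*h) + k + (2*h - k)" using Suc a b by simp
  also have "\<dots> = 3*h + Suc t * (2*h)" using Suc.prems by simp
  finally show ?case unfolding e .
qed

lemma pb_inj: "inj_on (pb h j) {0..<2*h+1}"
  unfolding inj_on_def pb_def by auto presburger+

lemma pb_rng: "k < 2*h+1 \<Longrightarrow> pb h j k < 2*h+1"
  unfolding pb_def by auto

theorem mainTheorem18:
  fixes V :: "'a set" and E :: "'a \<Rightarrow> 'a \<Rightarrow> bool" and r m n :: nat
  assumes "simple_graph V E" and "card V = m" and "regular V E r" and "r \<ge> 1"
  shows "(even n \<and> n \<ge> 2 \<longrightarrow>
            ZN_dist_antimagic (strong_verts (K_verts n) V) (strong_adj K_adj E))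
       \<and> (odd n \<and> n \<ge> 3 \<and> odd m \<longrightarrow>
            ZN_dist_antimagic (strong_verts (K_verts n) V) (strong_adj K_adj E))"
proof (intro conjI impI)
  assume "even n \<and> n \<ge> 2"
  then obtain t where n: "n = 2*t" by blast
  show "ZN_dist_antimagic (strong_verts (K_verts n) V) (strong_adj K_adj E)"
  proof (rule general[OF assms(1-3), of n "pa m"])
    show "inj_on (pa m j) {0..<m}" for j unfolding inj_on_def pa_def by auto
    show "pa m j k < m" if "k < m" for j k using that unfolding pa_def by auto
    show "(\<Sum>j<n. pa m j k) = t * (m - 1)" if "k < m" for k using pa_sum[OF that] n by simp
  qed
next
  assume h: "odd n \<and> n \<ge> 3 \<and> odd m"
  define t where "t = (n - 3) div 2"
  have n: "n = 2*t+3" using h unfolding t_def by presburger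
  obtain hh where m: "m = 2*hh+1" using h oddE by blast
  show "ZN_dist_antimagic (strong_verts (K_verts n) V) (strong_adj K_adj E)"
  proof (rule general[OF assms(1-3), of n "pb hh"])
    show "inj_on (pb hh j) {0..<m}" for j unfolding m by (rule pb_inj)
    show "pb hh j k < m" if "k < m" for j k using that pb_rng unfolding m by auto
    show "(\<Sum>j<n. pb hh j k) = 3*hh + t * (2*hh)" if "k < m" for k using pb_sum that n m by simp
  qed
qed

end
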